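(* If $Q$ and $Q'$ are proper quadrilaterals in $K^2$ sharing the same vertices, then the bisectors of $Q$ and $Q'$ are the same. Also, $\Phi_Q=\lambda\Phi_{Q'}$ for some $\lambda\in K$, and two lines are $Q$-orthogonal if and only if they are $Q'$-orthogonal.
   Context: $K$ is a field of characteristic $\neq 2$. Every line $L$ in $K^2$ has an equation $tX-uY+v=0$ normalized so that $t=1$ if $u=0$ and $u=1$ if $u\neq 0$; coefficients denoted $t_L,u_L,v_L$. A quadrilateral $Q=ABA'B'$ consists of four distinct lines $A,B,A',B'$ (sides), not all through one point, with adjacent sides ($A,B$; $B,A'$; $A',B'$; $B',A$) not parallel; opposite sides may be parallel. Vertices: $A\cap B$, $B\cap A'$, $A'\cap B'$, $B'\cap A$. $Q$ is proper if no three sides pass through a common point (so the four vertices are distinct). Let $\alpha=t_Au_Bu_{A'}u_{B'}-u_At_Bu_{A'}u_{B'}+u_Au_Bt_{A'}u_{B'}-u_Au_Bu_{A'}t_{B'}$, $\beta=t_Au_Bt_{A'}u_{B'}-u_At_Bu_{A'}t_{B'}$, $\gamma=t_At_Bt_{A'}u_{B'}-t_At_Bu_{A'}t_{B'}+t_Au_Bt_{A'}t_{B'}-u_At_Bt_{A'}t_{B'}$, $\Phi_Q(X,Y)=\gamma X^2-2\beta XY+\alpha Y^2$, and $\langle \mathbf v,\mathbf w\rangle_Q=\mathbf v^T\begin{pmatrix}\gamma&-\beta\\-\beta&\alpha\end{pmatrix}\mathbf w$. Lines $\ell_1,\ell_2$ are $Q$-orthogonal if $\langle (u_{\ell_1},t_{\ell_1}),(u_{\ell_2},t_{\ell_2})\rangle_Q=0$.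 A line $\ell$ crosses a pair $\{\ell_1,\ell_2\}$ if it is distinct from both and not parallel to both; $\mathrm{mid}_{\{\ell_1,\ell_2\}}(\ell)$ is the midpoint of the points where $\ell$ meets $\ell_1,\ell_2$ (the point at infinity of $\ell$ if one of them is at infinity). $\ell$ bisects $Q$ (is a bisector) if $\mathrm{mid}_{\mathsf P}(\ell)$ is the same for all pairs $\mathsf P$ among $\{A,A'\},\{B,B'\}$ that $\ell$ crosses; this common point is the midpoint of the bisector. *)

theory Defs
  imports Main
begin

text \<open>A line of K^2 is stored by its normalized coefficient triple (t, u, v) of the
 equation t X - u Y + v = 0, normalized so that t = 1 if u = 0 and u = 1 if u \<noteq> 0.\<close>

type_synonym 'a line = "'a \<times> 'a \<times> 'a"

definition tL :: "'a line \<Rightarrow> 'a" where "tL L = fst L"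
definition uL :: "'a line \<Rightarrow> 'a" where "uL L = fst (snd L)"
definition vL :: "'a line \<Rightarrow> 'a" where "vL L = snd (snd L)"

definition is_line :: "('a::field) line \<Rightarrow> bool" where
  "is_line L \<longleftrightarrow> (uL L = 0 \<and> tL L = 1) \<or> uL L = 1"

definition on_line :: "('a::field) line \<Rightarrow> 'a \<times> 'a \<Rightarrow> bool" where
  "on_line L p \<longleftrightarrow> tL L * fst p - uL L * snd p + vL L = 0"

definition parallel :: "('a::field) line \<Rightarrow> 'a line \<Rightarrow> bool" where
  "parallel L M \<longleftrightarrow> tL L * uL M - uL L * tL M = 0"

text \<open>Points of K^2 together with points at infinity; the point at infinity in the
 direction of a line L is represented by the normalized pair (t_L, u_L).\<close>
datatype 'a ppoint = Fin "'a \<times> 'a" | Infty "'a \<times> 'a"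

definition isect :: "('a::field) line \<Rightarrow> 'a line \<Rightarrow> 'a \<times> 'a" where
  "isect L M = (THE p. on_line L p \<and> on_line M p)"

definition meet :: "('a::field) line \<Rightarrow> 'a line \<Rightarrow> 'a ppoint" where
  "meet L M = (if parallel L M then Infty (tL L, uL L) else Fin (isect L M))"

definition crosses :: "('a::field) line \<Rightarrow> 'a line \<times> 'a line \<Rightarrow> bool" where
  "crosses L P \<longleftrightarrow> L \<noteq> fst P \<and> L \<noteq> snd P \<and> \<not> (parallel L (fst P) \<and> parallel L (snd P))"

definition mid :: "('a::field) line \<times> 'a line \<Rightarrow> 'a line \<Rightarrow> 'a ppoint" where
  "mid P L = (case (meet L (fst P), meet L (snd P)) of
      (Fin p, Fin q) \<Rightarrow> Fin ((fst p + fst q) / 2, (snd p + snd q) / 2)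
    | _ \<Rightarrow> Infty (tL L, uL L))"

type_synonym 'a quad = "'a line \<times> 'a line \<times> 'a line \<times> 'a line"

definition quadrilateral :: "('a::field) quad \<Rightarrow> bool" where
  "quadrilateral Q = (case Q of (A, B, A', B') \<Rightarrow>
     is_line A \<and> is_line B \<and> is_line A' \<and> is_line B' \<and>
     distinct [A, B, A', B'] \<and>
     \<not> (\<exists>p. on_line A p \<and> on_line B p \<and> on_line A' p \<and> on_line B' p) \<and>
     \<not> parallel A B \<and> \<not> parallel B A' \<and> \<not> parallel A' B' \<and> \<not> parallel B' A)"

definition proper_quad :: "('a::field) quad \<Rightarrow> bool" where
  "proper_quad Q = (quadrilateral Q \<and> (case Q of (A, B, A', B') \<Rightarrow>
     (\<forall>p. \<not> (on_line A p \<and> on_line B p \<and> on_line A' p) \<and>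
          \<not> (on_line A p \<and> on_line B p \<and> on_line B' p) \<and>
          \<not> (on_line A p \<and> on_line A' p \<and> on_line B' p) \<and>
          \<not> (on_line B p \<and> on_line A' p \<and> on_line B' p))))"

definition vertices :: "('a::field) quad \<Rightarrow> ('a \<times> 'a) set" where
  "vertices Q = (case Q of (A, B, A', B') \<Rightarrow>
     {isect A B, isect B A', isect A' B', isect B' A})"

definition alpha :: "('a::field) quad \<Rightarrow> 'a" where
  "alpha Q = (case Q of (A, B, A', B') \<Rightarrow>
     tL A * uL B * uL A' * uL B' - uL A * tL B * uL A' * uL B'
     + uL A * uL B * tL A' * uL B' - uL A * uL B * uL A' * tL B')"

definition beta :: "('a::field) quad \<Rightarrow> 'a" where
  "beta Q = (case Q of (A, B, A', B') \<Rightarrow>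
     tL A * uL B * tL A' * uL B' - uL A * tL B * uL A' * tL B')"

definition gamma :: "('a::field) quad \<Rightarrow> 'a" where
  "gamma Q = (case Q of (A, B, A', B') \<Rightarrow>
     tL A * tL B * tL A' * uL B' - tL A * tL B * uL A' * tL B'
     + tL A * uL B * tL A' * tL B' - uL A * tL B * tL A' * tL B')"

definition Phi :: "('a::field) quad \<Rightarrow> 'a \<Rightarrow> 'a \<Rightarrow> 'a" where
  "Phi Q X Y = gamma Q * X^2 - 2 * beta Q * X * Y + alpha Q * Y^2"

definition qinner :: "('a::field) quad \<Rightarrow> 'a \<times> 'a \<Rightarrow> 'a \<times> 'a \<Rightarrow> 'a" where
  "qinner Q v w = gamma Q * fst v * fst w - beta Q * fst v * snd w
                  - beta Q * snd v * fst w + alpha Q * snd v * snd w"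

definition q_orthogonal :: "('a::field) quad \<Rightarrow> 'a line \<Rightarrow> 'a line \<Rightarrow> bool" where
  "q_orthogonal Q L M \<longleftrightarrow> qinner Q (uL L, tL L) (uL M, tL M) = 0"

definition opp_pairs :: "'a quad \<Rightarrow> ('a line \<times> 'a line) set" where
  "opp_pairs Q = (case Q of (A, B, A', B') \<Rightarrow> {(A, A'), (B, B')})"

definition bisects :: "('a::field) line \<Rightarrow> 'a quad \<Rightarrow> bool" where
  "bisects L Q \<longleftrightarrow> is_line L \<and>
     (\<forall>P\<in>opp_pairs Q. \<forall>P'\<in>opp_pairs Q. crosses L P \<and> crosses L P' \<longrightarrow> mid P L = mid P' L)"

end

theory Submission
  imports Defs
begin


definition lev :: "('a::field) line \<Rightarrow> 'a \<times> 'a \<Rightarrow> 'a" where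
  "lev L p = tL L * fst p - uL L * snd p + vL L"

definition lineth :: "('a::field) \<times> 'a \<Rightarrow> 'a \<times> 'a \<Rightarrow> 'a line" where
  "lineth p q = (if fst p \<noteq> fst q then
      ((snd q - snd p) / (fst q - fst p), 1, snd p - ((snd q - snd p) / (fst q - fst p)) * fst p)
    else (1, 0, - fst p))"

lemma on_line_lev: "on_line L p \<longleftrightarrow> lev L p = 0"
  by (simp add: on_line_def lev_def)

lemma lineth_sym: "lineth p q = lineth (q::('a::field)\<times>'a) p"
proof (cases "fst p = fst q")
  case True then show ?thesis by (simp add: lineth_def)
next
  case False
  then have d: "fst q - fst p \<noteq> 0" "fst p - fst q \<noteq> 0" by auto
  have "(snd q - snd p) / (fst q - fst p) = (snd p - snd q) / (fst p - fst q)"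
    using d by (simp add: field_simps)
  moreover have "snd p - ((snd q - snd p) / (fst q - fst p)) * fst p =
     snd q - ((snd q - snd p) / (fst q - fst p)) * fst q"
    using d by (simp add: field_simps)
  ultimately show ?thesis using False by (simp add: lineth_def)
qed

lemma is_line_lineth: "is_line (lineth p q)"
  by (simp add: lineth_def is_line_def tL_def uL_def)

lemma lev_lineth_p: "lev (lineth p q) p = 0"
  by (simp add: lineth_def lev_def tL_def uL_def vL_def)

lemma lev_lineth_q: "lev (lineth p q) q = 0"
  using lev_lineth_p[of q p] by (simp add: lineth_sym)

lemma line_unique:
  assumes "is_line L" "lev L p = 0" "lev L q = 0" "p \<noteq> q"
  shows "L = lineth p q"
proof -
  obtain t u v where L: "L = (t,u,v)" by (cases L) auto
  obtain x1 y1 where p: "p = (x1,y1)" by (cases p) auto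
  obtain x2 y2 where q: "q = (x2,y2)" by (cases q) auto
  have e1: "t*x1 - u*y1 + v = 0" and e2: "t*x2 - u*y2 + v = 0"
    using assms by (auto simp: L p q lev_def tL_def uL_def vL_def)
  show ?thesis
  proof (cases "u = 0")
    case True
    then have t: "t = 1" using assms(1) by (simp add: is_line_def L tL_def uL_def)
    then have "x1 = x2" "v = -x1" using e1 e2 True by (auto simp: add_eq_0_iff)
    then show ?thesis using True t by (simp add: L p q lineth_def)
  next
    case False
    then have u: "u = 1" using assms(1) by (simp add: is_line_def L tL_def uL_def)
    have "x1 \<noteq> x2"
    proof
      assume "x1 = x2" then have "y1 = y2" using e1 e2 u by (simp add: algebra_simps)
      then show False using \<open>x1 = x2\<close> assms(4) p q by simp
    qed
    then have d: "x2 - x1 \<noteq> 0" by simp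
    have "y2 - y1 = t * (x2 - x1)" using e1 e2 u by algebra
    then have tt: "t = (y2 - y1)/(x2 - x1)" using d by (simp add: field_simps)
    have vv: "v = y1 - t * x1" using e1 u by (simp add: algebra_simps)
    show ?thesis using \<open>x1 \<noteq> x2\<close> u tt vv by (simp add: L p q lineth_def)
  qed
qed

lemma lineth_dir:
  assumes "p \<noteq> (q::('a::field)\<times>'a)"
  shows "\<exists>k. k \<noteq> 0 \<and> tL (lineth p q) = k*(snd q - snd p) \<and> uL (lineth p q) = k*(fst q - fst p)"
proof (cases "fst p = fst q")
  case True
  then have "snd q - snd p \<noteq> 0" using assms by (auto simp: prod_eq_iff)
  then show ?thesis using True
    by (intro exI[of _ "1/(snd q - snd p)"]) (simp add: lineth_def tL_def uL_def)
next
  case False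
  then have "fst q - fst p \<noteq> 0" by simp
  then show ?thesis using False
    by (intro exI[of _ "1/(fst q - fst p)"]) (simp add: lineth_def tL_def uL_def)
qed

lemma parallel_lineth:
  assumes "p \<noteq> q"
  shows "parallel L (lineth p q) \<longleftrightarrow> lev L p = lev L q"
proof -
  obtain k where k: "k \<noteq> 0" "tL (lineth p q) = k*(snd q - snd p)" "uL (lineth p q) = k*(fst q - fst p)"
    using lineth_dir[OF assms] by blast
  have "tL L * uL (lineth p q) - uL L * tL (lineth p q) = k * (lev L q - lev L p)"
    unfolding k lev_def by (simp add: algebra_simps)
  then show ?thesis using k(1) by (auto simp: parallel_def)
qed

definition col :: "('a::field)\<times>'a \<Rightarrow> 'a\<times>'a \<Rightarrow> 'a\<times>'a \<Rightarrow> bool" where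
  "col p q r \<longleftrightarrow> (fst q - fst p) * (snd r - snd p) - (snd q - snd p) * (fst r - fst p) = 0"

lemma col_of_lev:
  assumes "is_line L" "lev L p = lev L q" "lev L p = lev L r"
  shows "col p q r"
proof (cases "uL L = 0")
  case True
  then have "tL L = 1" using assms(1) by (simp add: is_line_def)
  then show ?thesis using assms True unfolding col_def lev_def by algebra
next
  case False
  then have "uL L = 1" using assms(1) by (simp add: is_line_def)
  then show ?thesis using assms unfolding col_def lev_def by algebra
qed

lemma isect_eq:
  assumes "\<not> parallel L M" "lev L z = 0" "lev M z = 0"
  shows "isect L M = z"
  unfolding isect_def
proof (rule the_equality)
  show "on_line L z \<and> on_line M z" using assms by (simp add: on_line_lev)
next
  fix w assume "on_line L w \<and> on_line M w"
  then have w: "lev L w = 0" "lev M w = 0" by (auto simp: on_line_lev)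
  define D where "D = tL L * uL M - uL L * tL M"
  have D: "D \<noteq> 0" using assms(1) by (simp add: parallel_def D_def)
  have "(fst w - fst z) * D = 0" using w assms(2,3) unfolding D_def lev_def by algebra
  moreover have "(snd w - snd z) * D = 0" using w assms(2,3) unfolding D_def lev_def by algebra
  ultimately show "w = z" using D by (simp add: prod_eq_iff)
qed

definition mpa :: "('a::field) \<Rightarrow> 'a \<Rightarrow> 'a\<times>'a \<Rightarrow> 'a\<times>'a \<Rightarrow> 'a\<times>'a" where
  "mpa a b p q = ((a*fst q - b*fst p)/(a-b), (a*snd q - b*snd p)/(a-b))"

lemma lev_mpa:
  assumes "a \<noteq> b"
  shows "lev K (mpa a b p q) = (a * lev K q - b * lev K p)/(a-b)"
proof -
  have "a - b \<noteq> 0" using assms by simp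
  define D where "D = a - b"
  have D: "D \<noteq> 0" using assms by (simp add: D_def)
  have "tL K * ((a*fst q - b*fst p)/D) - uL K * ((a*snd q - b*snd p)/D) + vL K
     = (tL K * (a*fst q - b*fst p) - uL K * (a*snd q - b*snd p) + vL K * D) / D"
    using D by (simp add: field_simps)
  also have "\<dots> = (a * lev K q - b * lev K p)/(a-b)"
    unfolding D_def lev_def by (simp add: algebra_simps)
  finally show ?thesis unfolding mpa_def lev_def D_def by simp
qed

lemma meet_lineth:
  assumes "p \<noteq> q" "lev L p \<noteq> lev L q"
  shows "meet L (lineth p q) = Fin (mpa (lev L p) (lev L q) p q)"
proof -
  have np: "\<not> parallel L (lineth p q)" using parallel_lineth[OF assms(1)] assms(2) by simp
  have "isect L (lineth p q) = mpa (lev L p) (lev L q) p q"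
    using np assms(2) by (intro isect_eq) (simp_all add: lev_mpa lev_lineth_p lev_lineth_q)
  then show ?thesis using np by (simp add: meet_def)
qed

lemma meet_lineth_par:
  assumes "p \<noteq> q" "lev L p = lev L q"
  shows "meet L (lineth p q) = Infty (tL L, uL L)"
  using assms parallel_lineth[OF assms(1)] by (simp add: meet_def)

definition MIDa :: "('a::field) \<Rightarrow> 'a \<Rightarrow> 'a \<Rightarrow> 'a \<Rightarrow> 'a\<times>'a \<Rightarrow> 'a\<times>'a \<Rightarrow> 'a\<times>'a \<Rightarrow> 'a\<times>'a \<Rightarrow> ('a\<times>'a) option" where
  "MIDa a b c d p q r s = (if a = b \<or> c = d then None else
     Some ((fst (mpa a b p q) + fst (mpa c d r s))/2, (snd (mpa a b p q) + snd (mpa c d r s))/2))"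

definition pp :: "'a line \<Rightarrow> ('a ppoint) \<Rightarrow> ('a\<times>'a) option" where
  "pp L x = (case x of Fin z \<Rightarrow> Some z | Infty _ \<Rightarrow> None)"

lemma mid_lineth:
  assumes "p \<noteq> q" "r \<noteq> s"
  shows "mid (lineth p q, lineth r s) L = (case MIDa (lev L p) (lev L q) (lev L r) (lev L s) p q r s of
     None \<Rightarrow> Infty (tL L, uL L) | Some z \<Rightarrow> Fin z)"
  using assms
  by (cases "lev L p = lev L q"; cases "lev L r = lev L s")
     (simp_all add: mid_def MIDa_def meet_lineth meet_lineth_par)

lemma mid_lineth_eq:
  assumes "p \<noteq> q" "r \<noteq> s" "p' \<noteq> q'" "r' \<noteq> s'"
  shows "mid (lineth p q, lineth r s) L = mid (lineth p' q', lineth r' s') L \<longleftrightarrow>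
    MIDa (lev L p) (lev L q) (lev L r) (lev L s) p q r s = MIDa (lev L p') (lev L q') (lev L r') (lev L s') p' q' r' s'"
  unfolding mid_lineth[OF assms(1,2)] mid_lineth[OF assms(3,4)]
  by (auto split: option.splits)

definition CRa :: "('a::field) \<Rightarrow> 'a \<Rightarrow> 'a \<Rightarrow> 'a \<Rightarrow> bool" where
  "CRa a b c d \<longleftrightarrow> \<not> (a = 0 \<and> b = 0) \<and> \<not> (c = 0 \<and> d = 0) \<and> \<not> (a = b \<and> c = d)"

lemma eq_lineth_iff:
  assumes "is_line L" "p \<noteq> q"
  shows "L = lineth p q \<longleftrightarrow> lev L p = 0 \<and> lev L q = 0"
  using assms line_unique lev_lineth_p lev_lineth_q by metis

lemma crosses_lineth:
  assumes "is_line L" "p \<noteq> q" "r \<noteq> s"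
  shows "crosses L (lineth p q, lineth r s) \<longleftrightarrow> CRa (lev L p) (lev L q) (lev L r) (lev L s)"
  using assms by (simp add: crosses_def CRa_def eq_lineth_iff parallel_lineth)

lemma mid_swap: "mid (M, N) L = mid (N, M) L"
  by (simp add: mid_def split: ppoint.splits)

lemma crosses_swap: "crosses L (M, N) = crosses L (N, M)"
  by (auto simp: crosses_def)




definition sm :: "('a::field) \<Rightarrow> 'a \<Rightarrow> 'a \<Rightarrow> 'a \<Rightarrow> 'a" where
  "sm a b x y = (a*y - b*x)/(a-b)"

lemma sm_inv: "a \<noteq> b \<Longrightarrow> sm a b x y = (a*y - b*x) * inverse (a - b) \<and> inverse (a - b) * (a - b) = 1"
  by (simp add: sm_def divide_inverse)

lemma S1:
  fixes a1 a2 a3 a4 b1 b2 b3 b4 :: "'a::field"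
  assumes "a1 \<noteq> a2" "a1 \<noteq> a3" "a1 \<noteq> a4" "a2 \<noteq> a3" "a2 \<noteq> a4" "a3 \<noteq> a4"
  shows "(a3-a1)*(a4-a2)*((sm a1 a2 b1 b2 + sm a3 a4 b3 b4) - (sm a1 a3 b1 b3 + sm a2 a4 b2 b4))
       = (a3-a2)*(a4-a1)*((sm a1 a2 b1 b2 + sm a3 a4 b3 b4) - (sm a4 a1 b4 b1 + sm a2 a3 b2 b3))"
proof -
  have d: "a1 - a2 \<noteq> 0" "a1 - a3 \<noteq> 0" "a1 - a4 \<noteq> 0" "a2 - a3 \<noteq> 0" "a2 - a4 \<noteq> 0" "a3 - a4 \<noteq> 0"
     "a4 - a1 \<noteq> 0"
    using assms by auto
  show ?thesis using sm_inv[of a1 a2 b1 b2] sm_inv[of a3 a4 b3 b4] sm_inv[of a1 a3 b1 b3]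
    sm_inv[of a2 a4 b2 b4] sm_inv[of a4 a1 b4 b1] sm_inv[of a2 a3 b2 b3] assms by algebra
qed

lemma S2:
  fixes a1 a2 a3 a4 b1 b2 b3 b4 :: "'a::field"
  assumes "a3 = a1" "a1 \<noteq> a2" "a1 \<noteq> a4"
  shows "(a1-a2)*(a1-a4)*((sm a1 a2 b1 b2 + sm a3 a4 b3 b4) - (sm a4 a1 b4 b1 + sm a2 a3 b2 b3))
      = (b3-b1)*a1*(a2-a4)"
proof -
  have d: "a1 - a2 \<noteq> 0" "a1 - a4 \<noteq> 0" "a4 - a1 \<noteq> 0" "a2 - a1 \<noteq> 0" using assms by auto
  show ?thesis using sm_inv[of a1 a2 b1 b2] sm_inv[of a3 a4 b3 b4]
    sm_inv[of a4 a1 b4 b1] sm_inv[of a2 a3 b2 b3] assms by algebra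
qed

lemma S3:
  fixes a1 a2 a3 a4 b1 b2 b3 b4 :: "'a::field"
  assumes "a4 = a2" "a1 \<noteq> a2" "a3 \<noteq> a2"
  shows "(a1-a2)*(a3-a2)*((sm a1 a2 b1 b2 + sm a3 a4 b3 b4) - (sm a4 a1 b4 b1 + sm a2 a3 b2 b3))
      = (b2-b4)*a2*(a3-a1)"
proof -
  have d: "a1 - a2 \<noteq> 0" "a3 - a2 \<noteq> 0" "a2 - a1 \<noteq> 0" "a2 - a3 \<noteq> 0" using assms by auto
  show ?thesis using sm_inv[of a1 a2 b1 b2] sm_inv[of a3 a4 b3 b4]
    sm_inv[of a4 a1 b4 b1] sm_inv[of a2 a3 b2 b3] assms by algebra
qed

lemma S4:
  fixes a1 a2 a3 a4 b1 b2 b3 b4 :: "'a::field"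
  assumes "a1 = 0" "a4 = 0" "a2 \<noteq> 0" "a3 \<noteq> 0"
  shows "sm a1 a2 b1 b2 + sm a3 a4 b3 b4 = sm a1 a3 b1 b3 + sm a2 a4 b2 b4"
  using assms unfolding sm_def by (simp add: field_simps)

lemma S5:
  fixes a1 a2 a3 a4 b1 b2 b3 b4 :: "'a::field"
  assumes "a2 = 0" "a3 = 0" "a1 \<noteq> 0" "a4 \<noteq> 0"
  shows "sm a1 a2 b1 b2 + sm a3 a4 b3 b4 = sm a1 a3 b1 b3 + sm a2 a4 b2 b4"
  using assms unfolding sm_def by (simp add: field_simps)

lemma S6:
  fixes a1 a2 a3 a4 b1 b2 b3 b4 :: "'a::field"
  assumes "a4 = a1" "a3 = a2" "a1 \<noteq> a2"
  shows "sm a1 a2 b1 b2 + sm a3 a4 b3 b4 = sm a1 a3 b1 b3 + sm a2 a4 b2 b4"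
proof -
  have d: "a1 - a2 \<noteq> 0" "a2 - a1 \<noteq> 0" using assms by auto
  show ?thesis using sm_inv[of a1 a2 b1 b2] sm_inv[of a3 a4 b3 b4] sm_inv[of a1 a3 b1 b3]
    sm_inv[of a2 a4 b2 b4] assms by algebra
qed




lemma mpa_sm: "mpa a b p q = (sm a b (fst p) (fst q), sm a b (snd p) (snd q))"
  by (simp add: mpa_def sm_def)

lemma MIDa_Some:
  assumes "a \<noteq> b" "c \<noteq> d"
  shows "MIDa a b c d p q r s = Some ((sm a b (fst p) (fst q) + sm c d (fst r) (fst s))/2,
           (sm a b (snd p) (snd q) + sm c d (snd r) (snd s))/2)"
  using assms by (simp add: MIDa_def mpa_sm)

lemma pair_half:
  fixes x1 x2 y1 y2 :: "'a::field"
  assumes "(2::'a) \<noteq> 0"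
  shows "(Some (x1/2, x2/2) = Some (y1/2, y2/2)) \<longleftrightarrow> x1 = y1 \<and> x2 = y2"
proof -
  have "x1/2 = y1/2 \<longleftrightarrow> x1 = y1" "x2/2 = y2/2 \<longleftrightarrow> x2 = y2"
    using assms by (simp_all only: divide_cancel_right) simp_all
  then show ?thesis by simp
qed

lemma MIDa_eq_iff:
  fixes a b c d a' b' c' d' :: "'a::field"
  assumes "(2::'a) \<noteq> 0" "a \<noteq> b" "c \<noteq> d" "a' \<noteq> b'" "c' \<noteq> d'"
  shows "MIDa a b c d p q r s = MIDa a' b' c' d' p' q' r' s' \<longleftrightarrow>
    (sm a b (fst p) (fst q) + sm c d (fst r) (fst s) = sm a' b' (fst p') (fst q') + sm c' d' (fst r') (fst s')) \<and>
    (sm a b (snd p) (snd q) + sm c d (snd r) (snd s) = sm a' b' (snd p') (snd q') + sm c' d' (snd r') (snd s'))"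
  unfolding MIDa_Some[OF assms(2,3)] MIDa_Some[OF assms(4,5)] pair_half[OF assms(1)] by (rule refl)

lemma absCORE:
  fixes a1 a2 a3 a4 :: "'a::field" and p1 p2 p3 p4 :: "'a \<times> 'a"
  assumes two: "(2::'a) \<noteq> 0" and dist: "distinct [p1,p2,p3,p4]"
    and n1: "\<not>(a1=a2 \<and> a2=a3)" and n2: "\<not>(a1=a2 \<and> a2=a4)"
    and n3: "\<not>(a1=a3 \<and> a3=a4)" and n4: "\<not>(a2=a3 \<and> a3=a4)"
    and H: "CRa a1 a2 a3 a4 \<and> CRa a4 a1 a2 a3 \<longrightarrow>
         MIDa a1 a2 a3 a4 p1 p2 p3 p4 = MIDa a4 a1 a2 a3 p4 p1 p2 p3"
    and cX: "CRa a1 a2 a3 a4" and cZ: "CRa a1 a3 a2 a4"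
  shows "MIDa a1 a2 a3 a4 p1 p2 p3 p4 = MIDa a1 a3 a2 a4 p1 p3 p2 p4"
proof (cases "CRa a4 a1 a2 a3")
  case False
  then consider "a4 = 0" "a1 = 0" | "a2 = 0" "a3 = 0" | "a4 = a1" "a2 = a3"
    unfolding CRa_def by blast
  then show ?thesis
  proof cases
    case 1
    then have "a2 \<noteq> 0" "a3 \<noteq> 0" using n2 n3 by auto
    then have "sm a1 a2 (fst p1) (fst p2) + sm a3 a4 (fst p3) (fst p4) = sm a1 a3 (fst p1) (fst p3) + sm a2 a4 (fst p2) (fst p4)"
       "sm a1 a2 (snd p1) (snd p2) + sm a3 a4 (snd p3) (snd p4) = sm a1 a3 (snd p1) (snd p3) + sm a2 a4 (snd p2) (snd p4)"
      using 1 by (simp_all add: S4)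
    moreover have "a1 \<noteq> a2" "a3 \<noteq> a4" "a1 \<noteq> a3" "a2 \<noteq> a4" using 1 \<open>a2 \<noteq> 0\<close> \<open>a3 \<noteq> 0\<close> by auto
    ultimately show ?thesis using two MIDa_eq_iff[of a1 a2 a3 a4 a1 a3 a2 a4 p1 p2 p3 p4 p1 p3 p2 p4] by auto
  next
    case 2
    then have "a1 \<noteq> 0" "a4 \<noteq> 0" using n1 n4 by auto
    then have "sm a1 a2 (fst p1) (fst p2) + sm a3 a4 (fst p3) (fst p4) = sm a1 a3 (fst p1) (fst p3) + sm a2 a4 (fst p2) (fst p4)"
       "sm a1 a2 (snd p1) (snd p2) + sm a3 a4 (snd p3) (snd p4) = sm a1 a3 (snd p1) (snd p3) + sm a2 a4 (snd p2) (snd p4)"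
      using 2 by (simp_all add: S5)
    moreover have "a1 \<noteq> a2" "a3 \<noteq> a4" "a1 \<noteq> a3" "a2 \<noteq> a4" using 2 \<open>a1 \<noteq> 0\<close> \<open>a4 \<noteq> 0\<close> by auto
    ultimately show ?thesis using two MIDa_eq_iff[of a1 a2 a3 a4 a1 a3 a2 a4 p1 p2 p3 p4 p1 p3 p2 p4] by auto
  next
    case 3
    then have "a1 \<noteq> a2" using n1 by auto
    then have "sm a1 a2 (fst p1) (fst p2) + sm a3 a4 (fst p3) (fst p4) = sm a1 a3 (fst p1) (fst p3) + sm a2 a4 (fst p2) (fst p4)"
       "sm a1 a2 (snd p1) (snd p2) + sm a3 a4 (snd p3) (snd p4) = sm a1 a3 (snd p1) (snd p3) + sm a2 a4 (snd p2) (snd p4)"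
      using 3 by (simp_all add: S6)
    moreover have "a3 \<noteq> a4" "a1 \<noteq> a3" "a2 \<noteq> a4" using 3 \<open>a1 \<noteq> a2\<close> by auto
    ultimately show ?thesis using two \<open>a1 \<noteq> a2\<close> MIDa_eq_iff[of a1 a2 a3 a4 a1 a3 a2 a4 p1 p2 p3 p4 p1 p3 p2 p4] by auto
  qed
next
  case True
  then have E: "MIDa a1 a2 a3 a4 p1 p2 p3 p4 = MIDa a4 a1 a2 a3 p4 p1 p2 p3" using H cX by blast
  show ?thesis
  proof (cases "a1 \<noteq> a2 \<and> a3 \<noteq> a4")
    case Xf: True
    have Yf: "a4 \<noteq> a1 \<and> a2 \<noteq> a3"
    proof (rule ccontr)
      assume "\<not> (a4 \<noteq> a1 \<and> a2 \<noteq> a3)"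
      then have "MIDa a4 a1 a2 a3 p4 p1 p2 p3 = None" by (auto simp: MIDa_def)
      moreover have "MIDa a1 a2 a3 a4 p1 p2 p3 p4 \<noteq> None" using Xf by (simp add: MIDa_def)
      ultimately show False using E by simp
    qed
    have EX: "sm a1 a2 (fst p1) (fst p2) + sm a3 a4 (fst p3) (fst p4) - (sm a4 a1 (fst p4) (fst p1) + sm a2 a3 (fst p2) (fst p3)) = 0"
      "sm a1 a2 (snd p1) (snd p2) + sm a3 a4 (snd p3) (snd p4) - (sm a4 a1 (snd p4) (snd p1) + sm a2 a3 (snd p2) (snd p3)) = 0"
      using E Xf Yf two MIDa_eq_iff[of a1 a2 a3 a4 a4 a1 a2 a3 p1 p2 p3 p4 p4 p1 p2 p3] by auto
    show ?thesis
    proof (cases "a1 \<noteq> a3 \<and> a2 \<noteq> a4")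
      case Zf: True
      have "(a3-a1)*(a4-a2) \<noteq> 0" using Zf by auto
      then have "sm a1 a2 (fst p1) (fst p2) + sm a3 a4 (fst p3) (fst p4) - (sm a1 a3 (fst p1) (fst p3) + sm a2 a4 (fst p2) (fst p4)) = 0"
        "sm a1 a2 (snd p1) (snd p2) + sm a3 a4 (snd p3) (snd p4) - (sm a1 a3 (snd p1) (snd p3) + sm a2 a4 (snd p2) (snd p4)) = 0"
        using S1[of a1 a2 a3 a4 "fst p1" "fst p2" "fst p3" "fst p4"]
          S1[of a1 a2 a3 a4 "snd p1" "snd p2" "snd p3" "snd p4"] Xf Yf Zf EX by auto
      then show ?thesis using Xf Zf two MIDa_eq_iff[of a1 a2 a3 a4 a1 a3 a2 a4 p1 p2 p3 p4 p1 p3 p2 p4] by auto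
    next
      case Zn: False
      show ?thesis
      proof (cases "a1 = a3")
        case True
        have "(fst p3 - fst p1) * a1 * (a2 - a4) = 0" "(snd p3 - snd p1) * a1 * (a2 - a4) = 0"
          using S2[of a3 a1 a2 a4 "fst p1" "fst p2" "fst p3" "fst p4"]
            S2[of a3 a1 a2 a4 "snd p1" "snd p2" "snd p3" "snd p4"] True Xf Yf EX by auto
        moreover have "fst p3 - fst p1 \<noteq> 0 \<or> snd p3 - snd p1 \<noteq> 0" using dist by (auto simp: prod_eq_iff)
        ultimately have "a1 = 0 \<or> a2 = a4" by auto
        then show ?thesis using cZ True by (auto simp: CRa_def)
      next
        case False
        then have "a2 = a4" using Zn by auto
        have "(fst p2 - fst p4) * a2 * (a3 - a1) = 0" "(snd p2 - snd p4) * a2 * (a3 - a1) = 0"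
          using S3[of a4 a2 a1 a3 "fst p1" "fst p2" "fst p3" "fst p4"]
            S3[of a4 a2 a1 a3 "snd p1" "snd p2" "snd p3" "snd p4"] \<open>a2 = a4\<close> Xf Yf EX by auto
        moreover have "fst p2 - fst p4 \<noteq> 0 \<or> snd p2 - snd p4 \<noteq> 0" using dist by (auto simp: prod_eq_iff)
        ultimately have "a2 = 0 \<or> a3 = a1" by auto
        then show ?thesis using cZ \<open>a2 = a4\<close> by (auto simp: CRa_def)
      qed
    qed
  next
    case Xn: False
    then have "MIDa a1 a2 a3 a4 p1 p2 p3 p4 = None" by (auto simp: MIDa_def)
    then have "MIDa a4 a1 a2 a3 p4 p1 p2 p3 = None" using E by simp
    then have "a4 = a1 \<or> a2 = a3" by (auto simp: MIDa_def split: if_splits)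
    then show ?thesis using Xn n1 n2 n3 n4 by auto
  qed
qed




lemma perm2:
  assumes "R a b" "\<And>x y. R x y \<Longrightarrow> R y x" "a \<noteq> b" "{c,d} = {a,b}" "c \<noteq> d"
  shows "R c d"
proof -
  have "(c = a \<and> d = b) \<or> (c = b \<and> d = a)" using assms(3-5) by (auto simp: doubleton_eq_iff)
  then show ?thesis using assms(1,2) by blast
qed

lemma perm3:
  assumes q: "R x1 x2 x3" and t1: "\<And>a b c. R a b c \<Longrightarrow> R b a c" and t2: "\<And>a b c. R a b c \<Longrightarrow> R a c b"
    and dx: "distinct [x1,x2,x3]" and dy: "distinct [y1,y2,y3]" and e: "{y1,y2,y3} = {x1,x2,x3}"
  shows "R y1 y2 y3"
proof -
  have "y1 \<in> {x1,x2,x3}" using e by auto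
  then consider "y1 = x1" | "y1 = x2" | "y1 = x3" by auto
  then show ?thesis
  proof cases
    case 1
    have "{y2,y3} = {x2,x3}" using e dx dy 1 insert_ident[of x1 "{y2,y3}" "{x2,x3}"] by auto
    then have "R x1 y2 y3" using dx dy by (intro perm2[of "R x1" x2 x3 y2 y3, OF q t2]) auto
    then show ?thesis using 1 by simp
  next
    case 2
    have "{x2,x1,x3} = {x1,x2,x3}" by auto
    then have "{y2,y3} = {x1,x3}" using e dx dy 2 insert_ident[of x2 "{y2,y3}" "{x1,x3}"] by auto
    then have "R x2 y2 y3" using dx dy by (intro perm2[of "R x2" x1 x3 y2 y3, OF t1[OF q] t2]) auto
    then show ?thesis using 2 by simp
  next
    case 3
    have "{x3,x1,x2} = {x1,x2,x3}" by auto
    then have "{y2,y3} = {x1,x2}" using e dx dy 3 insert_ident[of x3 "{y2,y3}" "{x1,x2}"] by auto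
    then have "R x3 y2 y3" using dx dy by (intro perm2[of "R x3" x1 x2 y2 y3, OF t1[OF t2[OF q]] t2]) auto
    then show ?thesis using 3 by simp
  qed
qed

lemma perm4:
  assumes q: "P v1 v2 v3 v4"
    and s1: "\<And>a b c d. P a b c d \<Longrightarrow> P b a c d"
    and s2: "\<And>a b c d. P a b c d \<Longrightarrow> P a c b d"
    and s3: "\<And>a b c d. P a b c d \<Longrightarrow> P a b d c"
    and dv: "distinct [v1,v2,v3,v4]" and dw: "distinct [w1,w2,w3,w4]"
    and e: "{w1,w2,w3,w4} = {v1,v2,v3,v4}"
  shows "P w1 w2 w3 w4"
proof -
  have "w1 \<in> {v1,v2,v3,v4}" using e by auto
  then consider "w1 = v1" | "w1 = v2" | "w1 = v3" | "w1 = v4" by auto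
  then show ?thesis
  proof cases
    case 1
    have "{w2,w3,w4} = {v2,v3,v4}" using e dv dw 1 insert_ident[of v1 "{w2,w3,w4}" "{v2,v3,v4}"] by auto
    then have "P v1 w2 w3 w4" using dv dw by (intro perm3[of "P v1" v2 v3 v4 w2 w3 w4, OF q s2 s3]) auto
    then show ?thesis using 1 by simp
  next
    case 2
    have "{v2,v1,v3,v4} = {v1,v2,v3,v4}" by auto
    then have "{w2,w3,w4} = {v1,v3,v4}" using e dv dw 2 insert_ident[of v2 "{w2,w3,w4}" "{v1,v3,v4}"] by auto
    then have "P v2 w2 w3 w4" using dv dw by (intro perm3[of "P v2" v1 v3 v4 w2 w3 w4, OF s1[OF q] s2 s3]) auto
    then show ?thesis using 2 by simp
  next
    case 3
    have "{v3,v1,v2,v4} = {v1,v2,v3,v4}" by auto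
    then have "{w2,w3,w4} = {v1,v2,v4}" using e dv dw 3 insert_ident[of v3 "{w2,w3,w4}" "{v1,v2,v4}"] by auto
    then have "P v3 w2 w3 w4" using dv dw by (intro perm3[of "P v3" v1 v2 v4 w2 w3 w4, OF s1[OF s2[OF q]] s2 s3]) auto
    then show ?thesis using 3 by simp
  next
    case 4
    have "{v4,v1,v2,v3} = {v1,v2,v3,v4}" by auto
    then have "{w2,w3,w4} = {v1,v2,v3}" using e dv dw 4 insert_ident[of v4 "{w2,w3,w4}" "{v1,v2,v3}"] by auto
    then have "P v4 w2 w3 w4" using dv dw by (intro perm3[of "P v4" v1 v2 v3 w2 w3 w4, OF s1[OF s2[OF s3[OF q]]] s2 s3]) auto
    then show ?thesis using 4 by simp
  qed
qed




definition F :: "('a::field)\<times>'a \<Rightarrow> 'a\<times>'a \<Rightarrow> 'a\<times>'a \<Rightarrow> 'a\<times>'a \<Rightarrow> 'a quad" where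
  "F a b c d = (lineth d a, lineth a b, lineth b c, lineth c d)"

definition gp :: "('a::field)\<times>'a \<Rightarrow> 'a\<times>'a \<Rightarrow> 'a\<times>'a \<Rightarrow> 'a\<times>'a \<Rightarrow> bool" where
  "gp a b c d \<longleftrightarrow> distinct [a,b,c,d] \<and> \<not> col a b c \<and> \<not> col a b d \<and> \<not> col a c d \<and> \<not> col b c d"

lemma col_sym1: "col p q r \<longleftrightarrow> col q p r"
  unfolding col_def by algebra

lemma col_sym2: "col p q r \<longleftrightarrow> col p r q"
  unfolding col_def by algebra

lemma gp_sw1: "gp a b c d \<Longrightarrow> gp b a c d"
  unfolding gp_def by (simp, metis col_sym1 col_sym2)
lemma gp_sw2: "gp a b c d \<Longrightarrow> gp a c b d"
  unfolding gp_def by (simp, metis col_sym1 col_sym2)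
lemma gp_sw3: "gp a b c d \<Longrightarrow> gp a b d c"
  unfolding gp_def by (simp, metis col_sym1 col_sym2)
lemma gp_rot: "gp a b c d \<Longrightarrow> gp d a b c"
  unfolding gp_def by (simp, metis col_sym1 col_sym2)

lemma CORE:
  assumes two: "(2::'a::field) \<noteq> 0" and g: "gp a b c d" and L: "is_line (L::'a line)"
    and H: "crosses L (lineth a b, lineth c d) \<and> crosses L (lineth d a, lineth b c) \<longrightarrow>
            mid (lineth a b, lineth c d) L = mid (lineth d a, lineth b c) L"
    and cX: "crosses L (lineth a b, lineth c d)" and cZ: "crosses L (lineth a c, lineth b d)"
  shows "mid (lineth a b, lineth c d) L = mid (lineth a c, lineth b d) L"
proof -
  have dist: "distinct [a,b,c,d]" using g by (simp add: gp_def)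
  have n1: "\<not>(lev L a = lev L b \<and> lev L b = lev L c)"
    using g col_of_lev[OF L, of a b c] by (auto simp: gp_def)
  have n2: "\<not>(lev L a = lev L b \<and> lev L b = lev L d)"
    using g col_of_lev[OF L, of a b d] by (auto simp: gp_def)
  have n3: "\<not>(lev L a = lev L c \<and> lev L c = lev L d)"
    using g col_of_lev[OF L, of a c d] by (auto simp: gp_def)
  have n4: "\<not>(lev L b = lev L c \<and> lev L c = lev L d)"
    using g col_of_lev[OF L, of b c d] by (auto simp: gp_def)
  have ne: "a \<noteq> b" "c \<noteq> d" "d \<noteq> a" "b \<noteq> c" "a \<noteq> c" "b \<noteq> d" using dist by auto
  note cr = crosses_lineth[OF L]
  note me = mid_lineth_eq
  have H': "CRa (lev L a) (lev L b) (lev L c) (lev L d) \<and> CRa (lev L d) (lev L a) (lev L b) (lev L c) \<longrightarrow>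
         MIDa (lev L a) (lev L b) (lev L c) (lev L d) a b c d = MIDa (lev L d) (lev L a) (lev L b) (lev L c) d a b c"
    using H by (simp add: cr[OF ne(1,2)] cr[OF ne(3,4)] me[OF ne(1,2,3,4)])
  have "MIDa (lev L a) (lev L b) (lev L c) (lev L d) a b c d = MIDa (lev L a) (lev L c) (lev L b) (lev L d) a c b d"
    by (rule absCORE[OF two dist n1 n2 n3 n4 H'])
       (use cX cZ cr[OF ne(1,2)] cr[OF ne(5,6)] in auto)
  then show ?thesis by (simp add: me[OF ne(1,2,5,6)])
qed

lemma bisects_F:
  "bisects L (F a b c d) \<longleftrightarrow> is_line L \<and>
    (crosses L (lineth d a, lineth b c) \<and> crosses L (lineth a b, lineth c d) \<longrightarrow>
      mid (lineth d a, lineth b c) L = mid (lineth a b, lineth c d) L)"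
  unfolding bisects_def opp_pairs_def F_def by auto

lemma sw1:
  assumes two: "(2::'a::field) \<noteq> 0" and g: "gp a b c d" and B: "bisects (L::'a line) (F a b c d)"
  shows "bisects L (F b a c d)"
proof -
  have L: "is_line L" using B bisects_F by blast
  have H: "crosses L (lineth a b, lineth c d) \<and> crosses L (lineth d a, lineth b c) \<longrightarrow>
            mid (lineth a b, lineth c d) L = mid (lineth d a, lineth b c) L"
    using B unfolding bisects_F by auto
  show ?thesis unfolding bisects_F
  proof (intro conjI L impI)
    assume c: "crosses L (lineth d b, lineth a c) \<and> crosses L (lineth b a, lineth c d)"
    have cX: "crosses L (lineth a b, lineth c d)" using c lineth_sym[of a b] by simp
    have cZ: "crosses L (lineth a c, lineth b d)" using c lineth_sym[of b d] crosses_swap by metis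
    have "mid (lineth a b, lineth c d) L = mid (lineth a c, lineth b d) L"
      by (rule CORE[OF two g L H cX cZ])
    then show "mid (lineth d b, lineth a c) L = mid (lineth b a, lineth c d) L"
      using lineth_sym[of a b] lineth_sym[of b d] mid_swap by metis
  qed
qed

lemma sw3:
  assumes two: "(2::'a::field) \<noteq> 0" and g: "gp a b c d" and B: "bisects (L::'a line) (F a b c d)"
  shows "bisects L (F a b d c)"
proof -
  have L: "is_line L" using B bisects_F by blast
  have H: "crosses L (lineth a b, lineth c d) \<and> crosses L (lineth d a, lineth b c) \<longrightarrow>
            mid (lineth a b, lineth c d) L = mid (lineth d a, lineth b c) L"
    using B unfolding bisects_F by auto
  show ?thesis unfolding bisects_F
  proof (intro conjI L impI)
    assume c: "crosses L (lineth c a, lineth b d) \<and> crosses L (lineth a b, lineth d c)"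
    have cX: "crosses L (lineth a b, lineth c d)" using c lineth_sym[of c d] by simp
    have cZ: "crosses L (lineth a c, lineth b d)" using c lineth_sym[of c a] by simp
    have "mid (lineth a b, lineth c d) L = mid (lineth a c, lineth b d) L"
      by (rule CORE[OF two g L H cX cZ])
    then show "mid (lineth c a, lineth b d) L = mid (lineth a b, lineth d c) L"
      using lineth_sym[of c a] lineth_sym[of c d] by metis
  qed
qed

lemma sw2:
  assumes two: "(2::'a::field) \<noteq> 0" and g: "gp a b c d" and B: "bisects (L::'a line) (F a b c d)"
  shows "bisects L (F a c b d)"
proof -
  have L: "is_line L" using B bisects_F by blast
  have g': "gp d a b c" using gp_rot[OF g] .
  have H: "crosses L (lineth d a, lineth b c) \<and> crosses L (lineth c d, lineth a b) \<longrightarrow>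
            mid (lineth d a, lineth b c) L = mid (lineth c d, lineth a b) L"
    using B unfolding bisects_F using crosses_swap mid_swap by metis
  show ?thesis unfolding bisects_F
  proof (intro conjI L impI)
    assume c: "crosses L (lineth d a, lineth c b) \<and> crosses L (lineth a c, lineth b d)"
    have cX: "crosses L (lineth d a, lineth b c)" using c lineth_sym[of c b] by simp
    have cZ: "crosses L (lineth d b, lineth a c)" using c lineth_sym[of b d] crosses_swap by metis
    have "mid (lineth d a, lineth b c) L = mid (lineth d b, lineth a c) L"
      by (rule CORE[OF two g' L H cX cZ])
    then show "mid (lineth d a, lineth c b) L = mid (lineth a c, lineth b d) L"
      using lineth_sym[of c b] lineth_sym[of b d] mid_swap by metis
  qed
qed




definition tr :: "('a::field)\<times>'a \<Rightarrow> 'a\<times>'a \<Rightarrow> 'a" where "tr p q = snd q - snd p"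
definition ur :: "('a::field)\<times>'a \<Rightarrow> 'a\<times>'a \<Rightarrow> 'a" where "ur p q = fst q - fst p"

definition alr :: "('a::field)\<times>'a \<Rightarrow> 'a\<times>'a \<Rightarrow> 'a\<times>'a \<Rightarrow> 'a\<times>'a \<Rightarrow> 'a" where
  "alr a b c d = tr d a * ur a b * ur b c * ur c d - ur d a * tr a b * ur b c * ur c d
     + ur d a * ur a b * tr b c * ur c d - ur d a * ur a b * ur b c * tr c d"
definition ber :: "('a::field)\<times>'a \<Rightarrow> 'a\<times>'a \<Rightarrow> 'a\<times>'a \<Rightarrow> 'a\<times>'a \<Rightarrow> 'a" where
  "ber a b c d = tr d a * ur a b * tr b c * ur c d - ur d a * tr a b * ur b c * tr c d"
definition gar :: "('a::field)\<times>'a \<Rightarrow> 'a\<times>'a \<Rightarrow> 'a\<times>'a \<Rightarrow> 'a\<times>'a \<Rightarrow> 'a" where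
  "gar a b c d = tr d a * tr a b * tr b c * ur c d - tr d a * tr a b * ur b c * tr c d
     + tr d a * ur a b * tr b c * tr c d - ur d a * tr a b * tr b c * tr c d"

lemma raw_sw1: "alr b a c d = - alr a b c d" "ber b a c d = - ber a b c d" "gar b a c d = - gar a b c d"
  unfolding alr_def ber_def gar_def tr_def ur_def by algebra+
lemma raw_sw2: "alr a c b d = - alr a b c d" "ber a c b d = - ber a b c d" "gar a c b d = - gar a b c d"
  unfolding alr_def ber_def gar_def tr_def ur_def by algebra+
lemma raw_sw3: "alr a b d c = - alr a b c d" "ber a b d c = - ber a b c d" "gar a b d c = - gar a b c d"
  unfolding alr_def ber_def gar_def tr_def ur_def by algebra+

lemma abg_F:
  assumes "distinct [a,b,c,d]"
  shows "\<exists>k. k \<noteq> 0 \<and> alpha (F a b c d) = k * alr a b c d \<and> beta (F a b c d) = k * ber a b c d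
      \<and> gamma (F a b c d) = k * gar a b c d"
proof -
  have ne: "d \<noteq> a" "a \<noteq> b" "b \<noteq> c" "c \<noteq> d" using assms by auto
  obtain k1 where k1: "k1 \<noteq> 0" "tL (lineth d a) = k1 * tr d a" "uL (lineth d a) = k1 * ur d a"
    using lineth_dir[OF ne(1)] unfolding tr_def ur_def by blast
  obtain k2 where k2: "k2 \<noteq> 0" "tL (lineth a b) = k2 * tr a b" "uL (lineth a b) = k2 * ur a b"
    using lineth_dir[OF ne(2)] unfolding tr_def ur_def by blast
  obtain k3 where k3: "k3 \<noteq> 0" "tL (lineth b c) = k3 * tr b c" "uL (lineth b c) = k3 * ur b c"
    using lineth_dir[OF ne(3)] unfolding tr_def ur_def by blast
  obtain k4 where k4: "k4 \<noteq> 0" "tL (lineth c d) = k4 * tr c d" "uL (lineth c d) = k4 * ur c d"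
    using lineth_dir[OF ne(4)] unfolding tr_def ur_def by blast
  show ?thesis
    apply (rule exI[of _ "k1*k2*k3*k4"])
    apply (simp add: k1 k2 k3 k4 alpha_def beta_def gamma_def F_def alr_def ber_def gar_def)
    apply (simp add: algebra_simps)
    done
qed

lemma isect_on:
  assumes "\<not> parallel L M"
  shows "lev L (isect L M) = 0 \<and> lev M (isect L M) = 0"
proof -
  define D where "D = tL L * uL M - uL L * tL M"
  have D: "D \<noteq> 0" using assms by (simp add: parallel_def D_def)
  define z where "z = ((uL L * vL M - uL M * vL L)/D, (tL L * vL M - tL M * vL L)/D)"
  have iD: "inverse D * D = 1" using D by simp
  have "lev L z = 0" "lev M z = 0" using iD D_def unfolding z_def lev_def divide_inverse fst_conv snd_conv
    by algebra+
  moreover then have "isect L M = z" using isect_eq assms by blast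
  ultimately show ?thesis by simp
qed

lemma col_on:
  assumes "is_line L" "lev L p = 0" "lev L q = 0" "p \<noteq> q" "col p q r"
  shows "lev L r = 0"
proof -
  have L: "L = lineth p q" using line_unique assms by blast
  obtain k where k: "tL L = k*(snd q - snd p)" "uL L = k*(fst q - fst p)"
    using lineth_dir[OF assms(4)] L by blast
  show ?thesis using assms(2,5) k unfolding lev_def col_def by algebra
qed




lemma quad_struct:
  assumes "proper_quad (Q::('a::field) quad)"
  obtains v1 v2 v3 v4 where "Q = F v1 v2 v3 v4" "gp v1 v2 v3 v4" "vertices Q = {v1,v2,v3,v4}"
proof -
  obtain A B A' B' where Q: "Q = (A,B,A',B')" by (cases Q) auto
  have lines: "is_line A" "is_line B" "is_line A'" "is_line B'"
    and np: "\<not> parallel A B" "\<not> parallel B A'" "\<not> parallel A' B'" "\<not> parallel B' A"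
    using assms by (auto simp: Q proper_quad_def quadrilateral_def)
  have noT: "\<And>p. \<not> (lev A p = 0 \<and> lev B p = 0 \<and> lev A' p = 0)"
     "\<And>p. \<not> (lev A p = 0 \<and> lev B p = 0 \<and> lev B' p = 0)"
     "\<And>p. \<not> (lev A p = 0 \<and> lev A' p = 0 \<and> lev B' p = 0)"
     "\<And>p. \<not> (lev B p = 0 \<and> lev A' p = 0 \<and> lev B' p = 0)"
    using assms by (auto simp: Q proper_quad_def on_line_lev)
  define v1 where "v1 = isect A B"
  define v2 where "v2 = isect B A'"
  define v3 where "v3 = isect A' B'"
  define v4 where "v4 = isect B' A"
  have o1: "lev A v1 = 0" "lev B v1 = 0" using isect_on[OF np(1)] v1_def by auto
  have o2: "lev B v2 = 0" "lev A' v2 = 0" using isect_on[OF np(2)] v2_def by auto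
  have o3: "lev A' v3 = 0" "lev B' v3 = 0" using isect_on[OF np(3)] v3_def by auto
  have o4: "lev B' v4 = 0" "lev A v4 = 0" using isect_on[OF np(4)] v4_def by auto
  have d12: "v1 \<noteq> v2" using noT(1) o1 o2 by metis
  have d13: "v1 \<noteq> v3" using noT(1) o1 o3 by metis
  have d14: "v1 \<noteq> v4" using noT(2) o1 o4 by metis
  have d23: "v2 \<noteq> v3" using noT(4) o2 o3 by metis
  have d24: "v2 \<noteq> v4" using noT(1) o2 o4 by metis
  have d34: "v3 \<noteq> v4" using noT(3) o3 o4 by metis
  have c1: "\<not> col v1 v2 v3"
  proof
    assume "col v1 v2 v3"
    then have "lev B v3 = 0" using col_on[OF lines(2) o1(2) o2(1) d12] by blast
    then show False using noT(4) o3 by metis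
  qed
  have c2: "\<not> col v1 v2 v4"
  proof
    assume "col v1 v2 v4"
    then have "lev B v4 = 0" using col_on[OF lines(2) o1(2) o2(1) d12] by blast
    then show False using noT(2) o4 by metis
  qed
  have c3: "\<not> col v1 v3 v4"
  proof
    assume "col v1 v3 v4"
    then have "col v3 v4 v1" using col_sym1 col_sym2 by metis
    then have "lev B' v1 = 0" using col_on[OF lines(4) o3(2) o4(1) d34] by blast
    then show False using noT(2) o1 by metis
  qed
  have c4: "\<not> col v2 v3 v4"
  proof
    assume "col v2 v3 v4"
    then have "col v3 v4 v2" using col_sym1 col_sym2 by metis
    then have "lev B' v2 = 0" using col_on[OF lines(4) o3(2) o4(1) d34] by blast
    then show False using noT(4) o2 by metis
  qed
  have "A = lineth v4 v1" using line_unique[OF lines(1) o4(2) o1(1)] d14 by auto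
  moreover have "B = lineth v1 v2" using line_unique[OF lines(2) o1(2) o2(1) d12] .
  moreover have "A' = lineth v2 v3" using line_unique[OF lines(3) o2(2) o3(1) d23] .
  moreover have "B' = lineth v3 v4" using line_unique[OF lines(4) o3(2) o4(1) d34] .
  ultimately have "Q = F v1 v2 v3 v4" by (simp add: Q F_def)
  moreover have "gp v1 v2 v3 v4" using d12 d13 d14 d23 d24 d34 c1 c2 c3 c4 by (simp add: gp_def)
  moreover have "vertices Q = {v1,v2,v3,v4}" by (simp add: Q vertices_def v1_def v2_def v3_def v4_def)
  ultimately show ?thesis using that by blast
qed

theorem proposition3p4:
  fixes Q Q' :: "('a::field) quad"
  assumes "(2::'a) \<noteq> 0"
    and "proper_quad Q" and "proper_quad Q'"
    and "vertices Q = vertices Q'"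
  shows "(\<forall>L. bisects L Q \<longleftrightarrow> bisects L Q')
       \<and> (\<exists>c::'a. \<forall>X Y. Phi Q X Y = c * Phi Q' X Y)
       \<and> (\<forall>L M. is_line L \<longrightarrow> is_line M \<longrightarrow> (q_orthogonal Q L M \<longleftrightarrow> q_orthogonal Q' L M))"
proof -
  note two = assms(1)
  obtain v1 v2 v3 v4 where QV: "Q = F v1 v2 v3 v4" "gp v1 v2 v3 v4" "vertices Q = {v1,v2,v3,v4}"
    using quad_struct[OF assms(2)] by blast
  obtain w1 w2 w3 w4 where QW: "Q' = F w1 w2 w3 w4" "gp w1 w2 w3 w4" "vertices Q' = {w1,w2,w3,w4}"
    using quad_struct[OF assms(3)] by blast
  define P where "P = (\<lambda>a b c d. gp a b c d \<and>
     (\<exists>k::'a. k \<noteq> 0 \<and> alr a b c d = k * alr v1 v2 v3 v4 \<and> ber a b c d = k * ber v1 v2 v3 v4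
        \<and> gar a b c d = k * gar v1 v2 v3 v4) \<and>
     (\<forall>L. bisects L (F a b c d) \<longleftrightarrow> bisects L (F v1 v2 v3 v4)))"
  have P0: "P v1 v2 v3 v4" unfolding P_def using QV(2) by (auto intro!: exI[of _ 1])
  have s1: "P b a c d" if "P a b c d" for a b c d
  proof -
    from that obtain k where g: "gp a b c d" and k: "k \<noteq> 0" "alr a b c d = k * alr v1 v2 v3 v4"
       "ber a b c d = k * ber v1 v2 v3 v4" "gar a b c d = k * gar v1 v2 v3 v4"
       and bi: "\<forall>L. bisects L (F a b c d) \<longleftrightarrow> bisects L (F v1 v2 v3 v4)"
      unfolding P_def by blast
    have g': "gp b a c d" using gp_sw1[OF g] .
    have "bisects L (F b a c d) \<longleftrightarrow> bisects L (F a b c d)" for L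
      using sw1[OF two g, of L] sw1[OF two g', of L] by blast
    moreover have "alr b a c d = (-k) * alr v1 v2 v3 v4" "ber b a c d = (-k) * ber v1 v2 v3 v4"
      "gar b a c d = (-k) * gar v1 v2 v3 v4" using raw_sw1[of a b c d] k by simp_all
    moreover have "- k \<noteq> 0" using k(1) by simp
    ultimately show ?thesis unfolding P_def using g' bi by blast
  qed
  have s2: "P a c b d" if "P a b c d" for a b c d
  proof -
    from that obtain k where g: "gp a b c d" and k: "k \<noteq> 0" "alr a b c d = k * alr v1 v2 v3 v4"
       "ber a b c d = k * ber v1 v2 v3 v4" "gar a b c d = k * gar v1 v2 v3 v4"
       and bi: "\<forall>L. bisects L (F a b c d) \<longleftrightarrow> bisects L (F v1 v2 v3 v4)"
      unfolding P_def by blast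
    have g': "gp a c b d" using gp_sw2[OF g] .
    have "bisects L (F a c b d) \<longleftrightarrow> bisects L (F a b c d)" for L
      using sw2[OF two g, of L] sw2[OF two g', of L] by blast
    moreover have "alr a c b d = (-k) * alr v1 v2 v3 v4" "ber a c b d = (-k) * ber v1 v2 v3 v4"
      "gar a c b d = (-k) * gar v1 v2 v3 v4" using raw_sw2[of a b c d] k by simp_all
    moreover have "- k \<noteq> 0" using k(1) by simp
    ultimately show ?thesis unfolding P_def using g' bi by blast
  qed
  have s3: "P a b d c" if "P a b c d" for a b c d
  proof -
    from that obtain k where g: "gp a b c d" and k: "k \<noteq> 0" "alr a b c d = k * alr v1 v2 v3 v4"
       "ber a b c d = k * ber v1 v2 v3 v4" "gar a b c d = k * gar v1 v2 v3 v4"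
       and bi: "\<forall>L. bisects L (F a b c d) \<longleftrightarrow> bisects L (F v1 v2 v3 v4)"
      unfolding P_def by blast
    have g': "gp a b d c" using gp_sw3[OF g] .
    have "bisects L (F a b d c) \<longleftrightarrow> bisects L (F a b c d)" for L
      using sw3[OF two g, of L] sw3[OF two g', of L] by blast
    moreover have "alr a b d c = (-k) * alr v1 v2 v3 v4" "ber a b d c = (-k) * ber v1 v2 v3 v4"
      "gar a b d c = (-k) * gar v1 v2 v3 v4" using raw_sw3[of a b c d] k by simp_all
    moreover have "- k \<noteq> 0" using k(1) by simp
    ultimately show ?thesis unfolding P_def using g' bi by blast
  qed
  have dv: "distinct [v1,v2,v3,v4]" using QV(2) by (simp add: gp_def)
  have dw: "distinct [w1,w2,w3,w4]" using QW(2) by (simp add: gp_def)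
  have e: "{w1,w2,w3,w4} = {v1,v2,v3,v4}" using QV(3) QW(3) assms(4) by simp
  have PW: "P w1 w2 w3 w4" by (rule perm4[of P, OF P0 s1 s2 s3 dv dw e])
  then obtain k where k: "k \<noteq> 0" "alr w1 w2 w3 w4 = k * alr v1 v2 v3 v4"
       "ber w1 w2 w3 w4 = k * ber v1 v2 v3 v4" "gar w1 w2 w3 w4 = k * gar v1 v2 v3 v4"
       and bi: "\<forall>L. bisects L (F w1 w2 w3 w4) \<longleftrightarrow> bisects L (F v1 v2 v3 v4)"
    unfolding P_def by blast
  obtain kq where kq: "kq \<noteq> 0" "alpha Q = kq * alr v1 v2 v3 v4" "beta Q = kq * ber v1 v2 v3 v4"
     "gamma Q = kq * gar v1 v2 v3 v4" using abg_F[OF dv] QV(1) by blast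
  obtain kq' where kq': "kq' \<noteq> 0" "alpha Q' = kq' * alr w1 w2 w3 w4" "beta Q' = kq' * ber w1 w2 w3 w4"
     "gamma Q' = kq' * gar w1 w2 w3 w4" using abg_F[OF dw] QW(1) by blast
  define c where "c = kq / (kq' * k)"
  have c0: "c \<noteq> 0" using kq(1) kq'(1) k(1) by (simp add: c_def)
  have ca: "alpha Q = c * alpha Q'" "beta Q = c * beta Q'" "gamma Q = c * gamma Q'"
    using kq(1) kq'(1) k(1) unfolding kq kq' k c_def by (simp_all add: field_simps)
  have phi: "\<forall>X Y. Phi Q X Y = c * Phi Q' X Y"
    unfolding Phi_def ca by (simp add: algebra_simps)
  have orth: "q_orthogonal Q L M \<longleftrightarrow> q_orthogonal Q' L M" for L M
  proof -
    have "qinner Q (uL L, tL L) (uL M, tL M) = c * qinner Q' (uL L, tL L) (uL M, tL M)"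
      unfolding qinner_def ca by (simp add: algebra_simps)
    then show ?thesis using c0 by (simp add: q_orthogonal_def)
  qed
  show ?thesis using bi phi orth QV(1) QW(1) by auto
qed


end
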